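(* Let $(\Omega,\mathcal{A},\mu)$ be a finite measure space and let $(f_n)_{n\in\mathbb{N}_0}$ be a sequence of non-negative functions in $L^1(\Omega,\mathcal{A},\mu)$ for which there exists $g\in L^1(\Omega,\mathcal{A},\mu)$ with $f_n\le g$ a.e. for all $n\in\mathbb{N}_0$. Then $\frac{1}{n}\sum_{j=0}^{n-1}f_j\to 0$ as $n\to\infty$ if and only if there is a sequence of measurable sets $(A_n)_{n\in\mathbb{N}_0}$ in $\mathcal{A}$ with $\frac{1}{n}\sum_{j=0}^{n-1}\chi_{A_j}\to 0$ and $\chi_{\Omega\setminus A_n}f_n\to 0$ as $n\to\infty$. Here all the limits may be taken either a.e. pointwise or in $L^1$ norm.
   Context: $\chi_A$ denotes the characteristic (indicator) function of a set $A$. *)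

theory Defs
  imports "HOL-Analysis.Analysis"
begin

end

theory Submission
  imports Defs "HOL-Analysis.Analysis"
begin



lemma cesaro0:
  fixes b :: "nat \<Rightarrow> real"
  assumes "b \<longlonglongrightarrow> 0"
  shows "(\<lambda>n. (\<Sum>j<n. b j) / real n) \<longlonglongrightarrow> 0"
proof (rule LIMSEQ_I)
  fix r :: real assume r: "0 < r"
  from LIMSEQ_D[OF assms, of "r/2"] r obtain N where N: "\<And>j. j \<ge> N \<Longrightarrow> \<bar>b j\<bar> < r/2"
    by auto
  define C where "C = (\<Sum>j<N. \<bar>b j\<bar>)"
  have C0: "C \<ge> 0" unfolding C_def by (simp add: sum_nonneg)
  define n0 where "n0 = max (N+1) (nat \<lceil>2*C/r\<rceil> + 1)"
  show "\<exists>no. \<forall>n\<ge>no. norm ((\<Sum>j<n. b j) / real n - 0) < r"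
  proof (intro exI allI impI)
    fix n assume n: "n0 \<le> n"
    then have nN: "N \<le> n" and npos: "real n > 0" unfolding n0_def by auto
    have nC: "2*C < r * real n"
    proof -
      have "2*C/r < real n" using n unfolding n0_def by linarith
      then show ?thesis using r by (simp add: field_simps)
    qed
    have split: "{..<n} = {..<N} \<union> {N..<n}" using nN by auto
    have "\<bar>\<Sum>j<n. b j\<bar> \<le> (\<Sum>j<n. \<bar>b j\<bar>)" by (rule sum_abs)
    also have "\<dots> = C + (\<Sum>j\<in>{N..<n}. \<bar>b j\<bar>)" unfolding C_def split
      by (subst sum.union_disjoint) auto
    also have "(\<Sum>j\<in>{N..<n}. \<bar>b j\<bar>) \<le> (\<Sum>j\<in>{N..<n}. r/2)"
      by (intro sum_mono) (use N in \<open>auto intro: less_imp_le\<close>)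
    also have "\<dots> \<le> real n * (r/2)" using r by simp
    finally have "\<bar>\<Sum>j<n. b j\<bar> \<le> C + real n * (r/2)" by simp
    moreover have "C + real n * (r/2) < r * real n" using nC by (simp add: field_simps)
    ultimately have "\<bar>\<Sum>j<n. b j\<bar> < r * real n" by linarith
    then show "norm ((\<Sum>j<n. b j) / real n - 0) < r" using npos
      by (simp add: abs_divide field_simps)
  qed
qed

lemma dens_bound:
  fixes a e :: "nat \<Rightarrow> real"
  assumes "\<And>j. 0 \<le> a j" "\<And>j. j \<le> n \<Longrightarrow> e n \<le> e j" "e n > 0"
  shows "(\<Sum>j<n. (if e j < a j then 1 else 0)) \<le> (\<Sum>j<n. a j) / e n"
proof -
  have "(\<Sum>j<n. (if e j < a j then 1 else 0)) \<le> (\<Sum>j<n. a j / e n)"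
  proof (intro sum_mono)
    fix j assume "j \<in> {..<n}"
    then have "e n \<le> e j" using assms(2) by auto
    then show "(if e j < a j then 1 else 0) \<le> a j / e n"
      using assms(1)[of j] assms(3) by (auto simp: field_simps)
  qed
  then show ?thesis by (simp add: sum_divide_distrib)
qed

definition Tb :: "(nat \<Rightarrow> real) \<Rightarrow> nat \<Rightarrow> real" where
  "Tb b n = (SUP m\<in>{n..}. min (b m) 1)"

definition epsb :: "(nat \<Rightarrow> real) \<Rightarrow> nat \<Rightarrow> real" where
  "epsb b n = sqrt (Tb b n + 1 / (real n + 1))"

lemma Tb_bdd: "bdd_above ((\<lambda>m. min ((b::nat\<Rightarrow>real) m) 1) ` {n..})"
  by (rule bdd_aboveI[of _ 1]) auto

lemma Tb_upper: "n \<le> m \<Longrightarrow> min (b m) 1 \<le> Tb b n"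
  unfolding Tb_def by (rule cSUP_upper[OF _ Tb_bdd]) auto

lemma Tb_nonneg: "(\<And>m. 0 \<le> b m) \<Longrightarrow> 0 \<le> Tb b n"
  using Tb_upper[of n n b] by (metis min.bounded_iff order.trans order_refl zero_le_one)

lemma Tb_mono: "n \<le> n' \<Longrightarrow> Tb b n' \<le> Tb b n"
  unfolding Tb_def by (rule cSUP_subset_mono) (auto simp: Tb_bdd)

lemma Tb_lim:
  assumes "\<And>m. 0 \<le> b m" "b \<longlonglongrightarrow> 0"
  shows "Tb b \<longlonglongrightarrow> 0"
proof (rule LIMSEQ_I)
  fix r :: real assume r: "0 < r"
  from LIMSEQ_D[OF assms(2), of "r/2"] r obtain N where N: "\<And>j. j \<ge> N \<Longrightarrow> \<bar>b j\<bar> < r/2"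
    by auto
  have TN: "Tb b N \<le> r/2" unfolding Tb_def
    apply (rule cSUP_least)
     apply simp
    subgoal for x using N[of x] by (auto simp: min_def)
    done
  show "\<exists>no. \<forall>n\<ge>no. norm (Tb b n - 0) < r"
  proof (intro exI allI impI)
    fix n assume "N \<le> n"
    then have "Tb b n \<le> Tb b N" by (rule Tb_mono)
    then show "norm (Tb b n - 0) < r" using TN r Tb_nonneg[of b n] assms(1) by auto
  qed
qed

lemma epsb_pos: "(\<And>m. 0 \<le> b m) \<Longrightarrow> 0 < epsb b n"
  unfolding epsb_def using Tb_nonneg[of b n] by (intro real_sqrt_gt_zero) (auto intro!: add_nonneg_pos)

lemma epsb_mono: "n \<le> n' \<Longrightarrow> epsb b n' \<le> epsb b n"
  unfolding epsb_def using Tb_mono[of n n' b]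
  by (intro real_sqrt_le_mono add_mono) (auto simp: field_simps)

lemma epsb_lim:
  assumes "\<And>m. 0 \<le> b m" "b \<longlonglongrightarrow> 0"
  shows "epsb b \<longlonglongrightarrow> 0"
proof -
  have "(\<lambda>n. 1 / (real n + 1)) \<longlonglongrightarrow> (0::real)"
    using LIMSEQ_Suc[OF lim_inverse_n] by (simp add: inverse_eq_divide add.commute)
  then have "(\<lambda>n. Tb b n + 1 / (real n + 1)) \<longlonglongrightarrow> 0 + 0"
    by (intro tendsto_add Tb_lim assms)
  then have "(\<lambda>n. sqrt (Tb b n + 1 / (real n + 1))) \<longlonglongrightarrow> sqrt 0"
    by (intro tendsto_real_sqrt) simp
  then show ?thesis unfolding epsb_def by simp
qed

lemma epsb_div:
  assumes "\<And>m. 0 \<le> b m" "b n \<le> 1"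
  shows "b n / epsb b n \<le> epsb b n"
proof -
  have e: "0 < epsb b n" by (rule epsb_pos) fact
  have "b n \<le> Tb b n" using Tb_upper[of n n b] assms(2) by simp
  also have "\<dots> \<le> (epsb b n)^2" unfolding epsb_def using Tb_nonneg[of b n] assms(1) by simp
  finally show ?thesis using e by (simp add: field_simps power2_eq_square)
qed

lemma kvn_fwd:
  fixes a :: "nat \<Rightarrow> real"
  assumes a0: "\<And>j. 0 \<le> a j" and lim: "(\<lambda>n. (\<Sum>j<n. a j) / real n) \<longlonglongrightarrow> 0"
  defines "e \<equiv> epsb (\<lambda>n. (\<Sum>j<n. a j) / real n)"
  shows "(\<lambda>n. (\<Sum>j<n. (if e j < a j then 1 else 0)) / real n) \<longlonglongrightarrow> 0"
    and "(\<lambda>n. if e n < a n then 0 else a n) \<longlonglongrightarrow> 0"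
proof -
  let ?s = "\<lambda>n. (\<Sum>j<n. a j) / real n"
  have s0: "\<And>m. 0 \<le> ?s m" using a0 by (simp add: sum_nonneg)
  have epos: "\<And>n. 0 < e n" unfolding e_def using s0 by (rule epsb_pos)
  have emono: "\<And>n j. j \<le> n \<Longrightarrow> e n \<le> e j" unfolding e_def by (rule epsb_mono)
  have elim: "e \<longlonglongrightarrow> 0" unfolding e_def using s0 lim by (rule epsb_lim)
  have ev: "eventually (\<lambda>n. ?s n \<le> 1) sequentially"
    using order_tendstoD(2)[OF lim, of 1] by (auto elim: eventually_mono)
  show "(\<lambda>n. (\<Sum>j<n. (if e j < a j then 1 else 0)) / real n) \<longlonglongrightarrow> 0"
  proof (rule tendsto_sandwich[OF _ _ tendsto_const elim])
    show "eventually (\<lambda>n. 0 \<le> (\<Sum>j<n. (if e j < a j then 1 else 0)) / real n) sequentially"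
      by (intro always_eventually allI divide_nonneg_nonneg sum_nonneg) auto
    show "eventually (\<lambda>n. (\<Sum>j<n. (if e j < a j then 1 else 0)) / real n \<le> e n) sequentially"
      using ev
    proof eventually_elim
      case (elim n)
      have "(\<Sum>j<n. (if e j < a j then 1 else 0)) / real n \<le> ((\<Sum>j<n. a j) / e n) / real n"
        by (intro divide_right_mono dens_bound a0 emono epos) auto
      also have "\<dots> = ?s n / e n" by simp
      also have "\<dots> \<le> e n" unfolding e_def using s0 elim by (rule epsb_div)
      finally show ?case .
    qed
  qed
  show "(\<lambda>n. if e n < a n then 0 else a n) \<longlonglongrightarrow> 0"
  proof (rule tendsto_sandwich[OF _ _ tendsto_const elim])
    show "eventually (\<lambda>n. 0 \<le> (if e n < a n then 0 else a n)) sequentially"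
      using a0 by auto
    show "eventually (\<lambda>n. (if e n < a n then 0 else a n) \<le> e n) sequentially"
      using epos by (auto intro!: always_eventually simp: less_imp_le)
  qed
qed

lemma kvn_rev:
  fixes a u :: "nat \<Rightarrow> real" and G :: real
  assumes a0: "\<And>j. 0 \<le> a j" and aG: "\<And>j. a j \<le> G"
    and u0: "\<And>j. 0 \<le> u j" and u1: "\<And>j. u j \<le> 1"
    and ul: "(\<lambda>n. (\<Sum>j<n. u j) / real n) \<longlonglongrightarrow> 0"
    and cl: "(\<lambda>n. (1 - u n) * a n) \<longlonglongrightarrow> 0"
  shows "(\<lambda>n. (\<Sum>j<n. a j) / real n) \<longlonglongrightarrow> 0"
proof (rule tendsto_sandwich[OF _ _ tendsto_const])
  show "eventually (\<lambda>n. 0 \<le> (\<Sum>j<n. a j) / real n) sequentially"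
    using a0 by (intro always_eventually allI divide_nonneg_nonneg sum_nonneg) auto
  have "(\<lambda>n. (\<Sum>j<n. (1 - u j) * a j) / real n + G * ((\<Sum>j<n. u j) / real n)) \<longlonglongrightarrow> 0 + G * 0"
    by (intro tendsto_add tendsto_mult tendsto_const cesaro0 cl ul)
  then show "(\<lambda>n. (\<Sum>j<n. (1 - u j) * a j) / real n + G * ((\<Sum>j<n. u j) / real n)) \<longlonglongrightarrow> 0"
    by simp
  show "eventually (\<lambda>n. (\<Sum>j<n. a j) / real n \<le> (\<Sum>j<n. (1 - u j) * a j) / real n + G * ((\<Sum>j<n. u j) / real n)) sequentially"
  proof (intro always_eventually allI)
    fix n
    have "(\<Sum>j<n. a j) \<le> (\<Sum>j<n. (1 - u j) * a j + G * u j)"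
    proof (intro sum_mono)
      fix j
      have "u j * a j \<le> u j * G" using u0[of j] aG[of j] by (intro mult_left_mono)
      then show "a j \<le> (1 - u j) * a j + G * u j" by (simp add: algebra_simps)
    qed
    also have "\<dots> = (\<Sum>j<n. (1 - u j) * a j) + G * (\<Sum>j<n. u j)"
      by (simp add: sum.distrib sum_distrib_left)
    finally have "(\<Sum>j<n. a j) / real n \<le> ((\<Sum>j<n. (1 - u j) * a j) + G * (\<Sum>j<n. u j)) / real n"
      by (rule divide_right_mono) simp
    then show "(\<Sum>j<n. a j) / real n \<le> (\<Sum>j<n. (1 - u j) * a j) / real n + G * ((\<Sum>j<n. u j) / real n)"
      by (simp add: add_divide_distrib)
  qed
qed


lemma ae_fwd:
  fixes M :: "'a measure" and f :: "nat \<Rightarrow> 'a \<Rightarrow> real"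
  assumes fm: "finite_measure M"
    and int: "\<And>n. integrable M (f n)"
    and nn: "\<And>n. AE x in M. 0 \<le> f n x"
    and H: "AE x in M. (\<lambda>n. (\<Sum>j<n. f j x) / real n) \<longlonglongrightarrow> 0"
  shows "\<exists>A :: nat \<Rightarrow> 'a set. (\<forall>n. A n \<in> sets M) \<and>
         (AE x in M. (\<lambda>n. (\<Sum>j<n. indicator (A j) x) / real n) \<longlonglongrightarrow> (0::real)) \<and>
         (AE x in M. (\<lambda>n. indicator (space M - A n) x * f n x) \<longlonglongrightarrow> 0)"
proof -
  have [measurable]: "\<And>n. f n \<in> borel_measurable M" using int by (rule borel_measurable_integrable)
  define e :: "nat \<Rightarrow> 'a \<Rightarrow> real" where "e j x = epsb (\<lambda>n. (\<Sum>i<n. f i x) / real n) j" for j x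
  have [measurable]: "e j \<in> borel_measurable M" for j
  proof -
    have "(\<lambda>x. SUP m\<in>{j..}. min ((\<Sum>i<m. f i x) / real m) 1) \<in> borel_measurable M"
      by (rule borel_measurable_cSUP) (auto simp: Tb_bdd)
    then show ?thesis unfolding e_def epsb_def Tb_def by measurable
  qed
  define A where "A j = {x\<in>space M. e j x < f j x}" for j
  have As: "A j \<in> sets M" for j unfolding A_def by measurable
  have nnall: "AE x in M. \<forall>n. 0 \<le> f n x" using nn by (simp add: AE_all_countable)
  have "AE x in M. (\<lambda>n. (\<Sum>j<n. indicator (A j) x) / real n) \<longlonglongrightarrow> (0::real)"
    using nnall H AE_space
  proof eventually_elim
    case (elim x)
    have "\<And>j. indicator (A j) x = (if e j x < f j x then 1 else (0::real))"
      using elim(3) by (simp add: A_def indicator_def)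
    then have "(\<lambda>n. (\<Sum>j<n. indicator (A j) x) / real n) = (\<lambda>n. (\<Sum>j<n. (if e j x < f j x then 1 else 0)) / real n)"
      by simp
    also have "\<dots> \<longlonglongrightarrow> 0" unfolding e_def by (rule kvn_fwd(1)) (use elim in auto)
    finally show ?case .
  qed
  moreover have "AE x in M. (\<lambda>n. indicator (space M - A n) x * f n x) \<longlonglongrightarrow> 0"
    using nnall H AE_space
  proof eventually_elim
    case (elim x)
    have "(\<lambda>n. indicator (space M - A n) x * f n x) = (\<lambda>n. if e n x < f n x then 0 else f n x)"
      using elim(3) by (auto simp: A_def indicator_def)
    also have "\<dots> \<longlonglongrightarrow> 0" unfolding e_def by (rule kvn_fwd(2)) (use elim in auto)
    finally show ?case .
  qed
  ultimately show ?thesis using As by blast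
qed

lemma ae_rev:
  fixes M :: "'a measure" and f :: "nat \<Rightarrow> 'a \<Rightarrow> real" and g :: "'a \<Rightarrow> real"
  assumes nn: "\<And>n. AE x in M. 0 \<le> f n x"
    and le: "\<And>n. AE x in M. f n x \<le> g x"
    and As: "\<forall>n. A n \<in> sets M"
    and H1: "AE x in M. (\<lambda>n. (\<Sum>j<n. indicator (A j) x) / real n) \<longlonglongrightarrow> (0::real)"
    and H2: "AE x in M. (\<lambda>n. indicator (space M - A n) x * f n x) \<longlonglongrightarrow> 0"
  shows "AE x in M. (\<lambda>n. (\<Sum>j<n. f j x) / real n) \<longlonglongrightarrow> 0"
proof -
  have nnall: "AE x in M. \<forall>n. 0 \<le> f n x" using nn by (simp add: AE_all_countable)
  have leall: "AE x in M. \<forall>n. f n x \<le> g x" using le by (simp add: AE_all_countable)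
  show ?thesis using nnall leall H1 H2 AE_space
  proof eventually_elim
    case (elim x)
    have "(\<lambda>n. indicator (space M - A n) x * f n x) = (\<lambda>n. (1 - indicator (A n) x) * f n x)"
      using elim(5) by (auto simp: indicator_def)
    with elim(4) have c: "(\<lambda>n. (1 - indicator (A n) x) * f n x) \<longlonglongrightarrow> 0" by simp
    show ?case
      by (rule kvn_rev[where u="\<lambda>j. indicator (A j) x" and G="g x", OF _ _ _ _ elim(3) c])
        (use elim in auto)
  qed
qed

lemma l1_fwd:
  fixes M :: "'a measure" and f :: "nat \<Rightarrow> 'a \<Rightarrow> real"
  assumes fm: "finite_measure M"
    and int: "\<And>n. integrable M (f n)"
    and nn: "\<And>n. AE x in M. 0 \<le> f n x"
    and H: "(\<lambda>n. \<integral>x. \<bar>(\<Sum>j<n. f j x) / real n\<bar> \<partial>M) \<longlonglongrightarrow> 0"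
  shows "\<exists>A :: nat \<Rightarrow> 'a set. (\<forall>n. A n \<in> sets M) \<and>
         (\<lambda>n. \<integral>x. \<bar>(\<Sum>j<n. indicator (A j) x) / real n\<bar> \<partial>M) \<longlonglongrightarrow> (0::real) \<and>
         (\<lambda>n. \<integral>x. \<bar>indicator (space M - A n) x * f n x\<bar> \<partial>M) \<longlonglongrightarrow> 0"
proof -
  interpret finite_measure M by (rule fm)
  have [measurable]: "\<And>n. f n \<in> borel_measurable M" using int by (rule borel_measurable_integrable)
  define S where "S n = (\<integral>x. \<bar>(\<Sum>j<n. f j x) / real n\<bar> \<partial>M)" for n
  have S0: "\<And>n. 0 \<le> S n" unfolding S_def by (intro integral_nonneg_AE) auto
  have SL: "S \<longlonglongrightarrow> 0" using H unfolding S_def .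
  define e where "e = epsb S"
  have epos: "\<And>n. 0 < e n" unfolding e_def using S0 by (rule epsb_pos)
  have emono: "\<And>n j. j \<le> n \<Longrightarrow> e n \<le> e j" unfolding e_def by (rule epsb_mono)
  have elim: "e \<longlonglongrightarrow> 0" unfolding e_def using S0 SL by (rule epsb_lim)
  define A where "A j = {x\<in>space M. e j < f j x}" for j
  have As: "A j \<in> sets M" for j unfolding A_def by measurable
  have nnall: "AE x in M. \<forall>n. 0 \<le> f n x" using nn by (simp add: AE_all_countable)
  have ev: "eventually (\<lambda>n. S n \<le> 1) sequentially"
    using order_tendstoD(2)[OF SL, of 1] by (auto elim: eventually_mono)
  have "(\<lambda>n. \<integral>x. \<bar>(\<Sum>j<n. indicator (A j) x) / real n\<bar> \<partial>M) \<longlonglongrightarrow> (0::real)"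
  proof (rule tendsto_sandwich[OF _ _ tendsto_const elim])
    show "eventually (\<lambda>n. 0 \<le> (\<integral>x. \<bar>(\<Sum>j<n. indicator (A j) x) / real n\<bar> \<partial>M)) sequentially"
      by (intro always_eventually allI integral_nonneg_AE) auto
    show "eventually (\<lambda>n. (\<integral>x. \<bar>(\<Sum>j<n. indicator (A j) x) / real n\<bar> \<partial>M) \<le> e n) sequentially"
      using ev
    proof eventually_elim
      case (elim n)
      have "(\<integral>x. \<bar>(\<Sum>j<n. indicator (A j) x) / real n\<bar> \<partial>M) \<le> (\<integral>x. \<bar>(\<Sum>j<n. f j x) / real n\<bar> / e n \<partial>M)"
      proof (rule integral_mono_AE')
        show "integrable M (\<lambda>x. \<bar>(\<Sum>j<n. f j x) / real n\<bar> / e n)"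
          using int by auto
        show "AE x in M. 0 \<le> \<bar>(\<Sum>j<n. f j x) / real n\<bar> / e n"
          using epos[of n] by (auto intro!: divide_nonneg_pos)
        show "AE x in M. \<bar>(\<Sum>j<n. indicator (A j) x) / real n\<bar> \<le> \<bar>(\<Sum>j<n. f j x) / real n\<bar> / e n"
          using nnall AE_space
        proof eventually_elim
          case (elim x)
          have ind: "\<And>j. indicator (A j) x = (if e j < f j x then 1 else (0::real))"
            using elim(2) by (simp add: A_def indicator_def)
          have "\<bar>(\<Sum>j<n. indicator (A j) x) / real n\<bar> = (\<Sum>j<n. (if e j < f j x then 1 else 0)) / real n"
            unfolding ind by (simp add: sum_nonneg)
          also have "\<dots> \<le> ((\<Sum>j<n. f j x) / e n) / real n"
            by (intro divide_right_mono dens_bound emono epos) (use elim in auto)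
          also have "\<dots> = \<bar>(\<Sum>j<n. f j x) / real n\<bar> / e n"
            using elim(1) by (simp add: sum_nonneg)
          finally show ?case .
        qed
      qed
      also have "\<dots> = S n / e n" unfolding S_def by simp
      also have "\<dots> \<le> e n" unfolding e_def using S0 elim by (rule epsb_div)
      finally show ?case .
    qed
  qed
  moreover have "(\<lambda>n. \<integral>x. \<bar>indicator (space M - A n) x * f n x\<bar> \<partial>M) \<longlonglongrightarrow> 0"
  proof (rule tendsto_sandwich[OF _ _ tendsto_const])
    show "eventually (\<lambda>n. 0 \<le> (\<integral>x. \<bar>indicator (space M - A n) x * f n x\<bar> \<partial>M)) sequentially"
      by (intro always_eventually allI integral_nonneg_AE) auto
    have "(\<lambda>n. e n * measure M (space M)) \<longlonglongrightarrow> 0 * measure M (space M)"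
      by (intro tendsto_mult elim tendsto_const)
    then show "(\<lambda>n. e n * measure M (space M)) \<longlonglongrightarrow> 0" by simp
    show "eventually (\<lambda>n. (\<integral>x. \<bar>indicator (space M - A n) x * f n x\<bar> \<partial>M) \<le> e n * measure M (space M)) sequentially"
    proof (intro always_eventually allI)
      fix n
      have "(\<integral>x. \<bar>indicator (space M - A n) x * f n x\<bar> \<partial>M) \<le> (\<integral>x. e n \<partial>M)"
      proof (rule integral_mono_AE')
        show "integrable M (\<lambda>x. e n)" by simp
        show "AE x in M. 0 \<le> e n" using epos[of n] by (auto intro: less_imp_le)
        show "AE x in M. \<bar>indicator (space M - A n) x * f n x\<bar> \<le> e n"
          using nnall AE_space
        proof eventually_elim
          case (elim x)
          then show ?case using epos[of n] by (auto simp: A_def indicator_def)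
        qed
      qed
      then show "(\<integral>x. \<bar>indicator (space M - A n) x * f n x\<bar> \<partial>M) \<le> e n * measure M (space M)"
        by (simp add: mult.commute)
    qed
  qed
  ultimately show ?thesis using As by blast
qed

lemma l1_rev:
  fixes M :: "'a measure" and f :: "nat \<Rightarrow> 'a \<Rightarrow> real" and g :: "'a \<Rightarrow> real"
  assumes fm: "finite_measure M"
    and int: "\<And>n. integrable M (f n)"
    and nn: "\<And>n. AE x in M. 0 \<le> f n x"
    and gi: "integrable M g"
    and le: "\<And>n. AE x in M. f n x \<le> g x"
    and As: "\<forall>n. A n \<in> sets M"
    and H1: "(\<lambda>n. \<integral>x. \<bar>(\<Sum>j<n. indicator (A j) x) / real n\<bar> \<partial>M) \<longlonglongrightarrow> (0::real)"
    and H2: "(\<lambda>n. \<integral>x. \<bar>indicator (space M - A n) x * f n x\<bar> \<partial>M) \<longlonglongrightarrow> 0"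
  shows "(\<lambda>n. \<integral>x. \<bar>(\<Sum>j<n. f j x) / real n\<bar> \<partial>M) \<longlonglongrightarrow> 0"
proof -
  interpret finite_measure M by (rule fm)
  have [measurable]: "\<And>n. f n \<in> borel_measurable M" using int by (rule borel_measurable_integrable)
  have [measurable]: "g \<in> borel_measurable M" using gi by (rule borel_measurable_integrable)
  have [measurable]: "\<And>n. A n \<in> sets M" using As by auto
  have nnall: "AE x in M. \<forall>n. 0 \<le> f n x" using nn by (simp add: AE_all_countable)
  have leall: "AE x in M. \<forall>n. f n x \<le> g x" using le by (simp add: AE_all_countable)
  define D where "D n = (\<integral>x. \<bar>(\<Sum>j<n. indicator (A j) x) / real n\<bar> \<partial>M)" for n
  define E where "E n = (\<integral>x. \<bar>indicator (space M - A n) x * f n x\<bar> \<partial>M)" for n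
  have intE: "integrable M (\<lambda>x. \<bar>indicator (space M - A n) x * f n x\<bar>)" for n
  proof -
    have "integrable M (\<lambda>x. f n x * indicator (space M - A n) x)"
      by (rule integrable_real_mult_indicator) (auto intro: int)
    then show ?thesis by (simp add: mult.commute)
  qed
  have intS: "integrable M (\<lambda>x. (\<Sum>j<n. indicator (A j) x) :: real)" for n
    by (intro Bochner_Integration.integrable_sum integrable_real_indicator) (auto simp: emeasure_real less_top[symmetric])
  have intD: "integrable M (\<lambda>x. \<bar>(\<Sum>j<n. indicator (A j) x) / real n\<bar> :: real)" for n
    using intS[of n] by (intro integrable_abs integrable_divide_zero)
  have dc: "(\<lambda>k. \<integral>x. max (g x - real k) 0 \<partial>M) \<longlonglongrightarrow> (\<integral>x. 0 \<partial>M)"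
  proof (rule integral_dominated_convergence[where w="\<lambda>x. \<bar>g x\<bar>"])
    show "integrable M (\<lambda>x. \<bar>g x\<bar>)" using gi by auto
    show "(\<lambda>x. 0::real) \<in> borel_measurable M" by simp
    show "\<And>k. (\<lambda>x. max (g x - real k) 0) \<in> borel_measurable M" by measurable
    show "\<And>k. AE x in M. norm (max (g x - real k) 0) \<le> \<bar>g x\<bar>" by auto
    show "AE x in M. (\<lambda>k. max (g x - real k) 0) \<longlonglongrightarrow> 0"
    proof (intro AE_I2)
      fix x
      obtain k0 :: nat where "g x \<le> real k0" using real_arch_simple by blast
      then have "eventually (\<lambda>k. max (g x - real k) 0 = 0) sequentially"
        unfolding eventually_sequentially by (intro exI[of _ k0]) auto
      then show "(\<lambda>k. max (g x - real k) 0) \<longlonglongrightarrow> 0"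
        by (rule tendsto_eventually)
    qed
  qed
  show ?thesis
  proof (rule tendstoI)
    fix r :: real assume r: "0 < r"
    from LIMSEQ_D[OF dc, of "r/3"] r obtain k where
      k: "\<bar>\<integral>x. max (g x - real k) 0 \<partial>M\<bar> < r/3" by auto
    define K where "K = real k"
    have K0: "0 \<le> K" unfolding K_def by simp
    have e1: "eventually (\<lambda>n. (\<Sum>j<n. E j) / real n < r/3) sequentially"
      using r by (intro order_tendstoD(2)[OF cesaro0]) (auto simp: E_def H2)
    have "(\<lambda>n. K * D n) \<longlonglongrightarrow> K * 0" unfolding D_def by (intro tendsto_mult tendsto_const H1)
    then have e2: "eventually (\<lambda>n. K * D n < r/3) sequentially"
      using r by (intro order_tendstoD(2)) auto
    show "eventually (\<lambda>n. dist (\<integral>x. \<bar>(\<Sum>j<n. f j x) / real n\<bar> \<partial>M) 0 < r) sequentially"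
      using e1 e2
    proof eventually_elim
      case (elim n)
      let ?R = "\<lambda>x. (\<Sum>j<n. \<bar>indicator (space M - A j) x * f j x\<bar>) / real n + max (g x - K) 0
                   + K * \<bar>(\<Sum>j<n. indicator (A j) x) / real n\<bar>"
      have intR: "integrable M ?R"
      proof -
        have "integrable M (\<lambda>x. max (g x - K) 0)" using gi by (intro integrable_max Bochner_Integration.integrable_diff) auto
        moreover have "integrable M (\<lambda>x. (\<Sum>j<n. \<bar>indicator (space M - A j) x * f j x\<bar>) / real n)"
          by (rule integrable_divide_zero, rule Bochner_Integration.integrable_sum, rule intE)
        moreover have "integrable M (\<lambda>x. K * \<bar>(\<Sum>j<n. indicator (A j) x) / real n\<bar>)"
          by (rule integrable_mult_right, rule intD)
        ultimately show ?thesis by (intro Bochner_Integration.integrable_add)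
      qed
      have "(\<integral>x. \<bar>(\<Sum>j<n. f j x) / real n\<bar> \<partial>M) \<le> (\<integral>x. ?R x \<partial>M)"
      proof (rule integral_mono_AE')
        show "integrable M ?R" by (rule intR)
        show "AE x in M. 0 \<le> ?R x"
          using K0 by (auto intro!: add_nonneg_nonneg divide_nonneg_nonneg sum_nonneg)
        show "AE x in M. \<bar>(\<Sum>j<n. f j x) / real n\<bar> \<le> ?R x"
          using nnall leall AE_space
        proof eventually_elim
          case (elim x)
          have pt: "f j x \<le> \<bar>indicator (space M - A j) x * f j x\<bar> + max (g x - K) 0 + K * indicator (A j) x" for j
            using elim(1)[rule_format, of j] elim(2)[rule_format, of j] elim(3) K0 by (auto simp: indicator_def)
          have "(\<Sum>j<n. f j x) \<le> (\<Sum>j<n. \<bar>indicator (space M - A j) x * f j x\<bar>) + real n * max (g x - K) 0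
                 + K * (\<Sum>j<n. indicator (A j) x)"
            using sum_mono[of "{..<n}", OF pt]
            by (simp add: sum.distrib sum_distrib_left)
          then have "(\<Sum>j<n. f j x) / real n \<le> ((\<Sum>j<n. \<bar>indicator (space M - A j) x * f j x\<bar>) + real n * max (g x - K) 0
                 + K * (\<Sum>j<n. indicator (A j) x)) / real n"
            by (rule divide_right_mono) simp
          also have "\<dots> \<le> ?R x"
          proof (cases "n = 0")
            case True then show ?thesis by simp
          next
            case False
            have "0 \<le> (\<Sum>j<n. indicator (A j) x :: real)" by (simp add: sum_nonneg)
            then show ?thesis using False by (simp add: add_divide_distrib)
          qed
          finally show ?case using elim(1) by (simp add: sum_nonneg)
        qed
      qed
      also have "(\<integral>x. ?R x \<partial>M) = (\<Sum>j<n. E j) / real n + (\<integral>x. max (g x - K) 0 \<partial>M) + K * D n"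
        using intE intD gi intS unfolding E_def D_def
        by (subst Bochner_Integration.integral_add integral_divide_zero Bochner_Integration.integral_sum integral_mult_right_zero
            | auto intro!: Bochner_Integration.integrable_add integrable_divide_zero Bochner_Integration.integrable_sum integrable_max integrable_real_indicator)+
      also have "\<dots> < r/3 + r/3 + r/3" using elim k unfolding K_def by linarith
      finally show ?case by simp
    qed
  qed
qed

theorem corollary5p1:
  fixes M :: "'a measure" and f :: "nat \<Rightarrow> 'a \<Rightarrow> real" and g :: "'a \<Rightarrow> real"
  assumes "finite_measure M"
    and "\<And>n. integrable M (f n)"
    and "\<And>n. AE x in M. 0 \<le> f n x"
    and "integrable M g"
    and "\<And>n. AE x in M. f n x \<le> g x"
  shows
    "((AE x in M. (\<lambda>n. (\<Sum>j<n. f j x) / real n) \<longlonglongrightarrow> 0) \<longleftrightarrow>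
      (\<exists>A :: nat \<Rightarrow> 'a set. (\<forall>n. A n \<in> sets M) \<and>
         (AE x in M. (\<lambda>n. (\<Sum>j<n. indicator (A j) x) / real n) \<longlonglongrightarrow> (0::real)) \<and>
         (AE x in M. (\<lambda>n. indicator (space M - A n) x * f n x) \<longlonglongrightarrow> 0)))
     \<and>
     ((\<lambda>n. \<integral>x. \<bar>(\<Sum>j<n. f j x) / real n\<bar> \<partial>M) \<longlonglongrightarrow> 0 \<longleftrightarrow>
      (\<exists>A :: nat \<Rightarrow> 'a set. (\<forall>n. A n \<in> sets M) \<and>
         (\<lambda>n. \<integral>x. \<bar>(\<Sum>j<n. indicator (A j) x) / real n\<bar> \<partial>M) \<longlonglongrightarrow> (0::real) \<and>
         (\<lambda>n. \<integral>x. \<bar>indicator (space M - A n) x * f n x\<bar> \<partial>M) \<longlonglongrightarrow> 0))"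
  proof -
  have P1: "(AE x in M. (\<lambda>n. (\<Sum>j<n. f j x) / real n) \<longlonglongrightarrow> 0) \<longleftrightarrow>
      (\<exists>A :: nat \<Rightarrow> 'a set. (\<forall>n. A n \<in> sets M) \<and>
         (AE x in M. (\<lambda>n. (\<Sum>j<n. indicator (A j) x) / real n) \<longlonglongrightarrow> (0::real)) \<and>
         (AE x in M. (\<lambda>n. indicator (space M - A n) x * f n x) \<longlonglongrightarrow> 0))"
  proof (rule iffI)
    assume h: "AE x in M. (\<lambda>n. (\<Sum>j<n. f j x) / real n) \<longlonglongrightarrow> 0"
    show "\<exists>A :: nat \<Rightarrow> 'a set. (\<forall>n. A n \<in> sets M) \<and>
         (AE x in M. (\<lambda>n. (\<Sum>j<n. indicator (A j) x) / real n) \<longlonglongrightarrow> (0::real)) \<and>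
         (AE x in M. (\<lambda>n. indicator (space M - A n) x * f n x) \<longlonglongrightarrow> 0)"
      by (rule ae_fwd[OF assms(1,2,3) h])
  next
    assume "\<exists>A :: nat \<Rightarrow> 'a set. (\<forall>n. A n \<in> sets M) \<and>
         (AE x in M. (\<lambda>n. (\<Sum>j<n. indicator (A j) x) / real n) \<longlonglongrightarrow> (0::real)) \<and>
         (AE x in M. (\<lambda>n. indicator (space M - A n) x * f n x) \<longlonglongrightarrow> 0)"
    then obtain A :: "nat \<Rightarrow> 'a set" where a: "\<forall>n. A n \<in> sets M"
      and b: "AE x in M. (\<lambda>n. (\<Sum>j<n. indicator (A j) x) / real n) \<longlonglongrightarrow> (0::real)"
      and c: "AE x in M. (\<lambda>n. indicator (space M - A n) x * f n x) \<longlonglongrightarrow> 0"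
      by (elim exE conjE)
    show "AE x in M. (\<lambda>n. (\<Sum>j<n. f j x) / real n) \<longlonglongrightarrow> 0"
      by (rule ae_rev[OF assms(3,5) a b c])
  qed
  have P2: "((\<lambda>n. \<integral>x. \<bar>(\<Sum>j<n. f j x) / real n\<bar> \<partial>M) \<longlonglongrightarrow> 0) \<longleftrightarrow>
      (\<exists>A :: nat \<Rightarrow> 'a set. (\<forall>n. A n \<in> sets M) \<and>
         (\<lambda>n. \<integral>x. \<bar>(\<Sum>j<n. indicator (A j) x) / real n\<bar> \<partial>M) \<longlonglongrightarrow> (0::real) \<and>
         (\<lambda>n. \<integral>x. \<bar>indicator (space M - A n) x * f n x\<bar> \<partial>M) \<longlonglongrightarrow> 0)"
  proof (rule iffI)
    assume h: "(\<lambda>n. \<integral>x. \<bar>(\<Sum>j<n. f j x) / real n\<bar> \<partial>M) \<longlonglongrightarrow> 0"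
    show "\<exists>A :: nat \<Rightarrow> 'a set. (\<forall>n. A n \<in> sets M) \<and>
         (\<lambda>n. \<integral>x. \<bar>(\<Sum>j<n. indicator (A j) x) / real n\<bar> \<partial>M) \<longlonglongrightarrow> (0::real) \<and>
         (\<lambda>n. \<integral>x. \<bar>indicator (space M - A n) x * f n x\<bar> \<partial>M) \<longlonglongrightarrow> 0"
      by (rule l1_fwd[OF assms(1,2,3) h])
  next
    assume "\<exists>A :: nat \<Rightarrow> 'a set. (\<forall>n. A n \<in> sets M) \<and>
         (\<lambda>n. \<integral>x. \<bar>(\<Sum>j<n. indicator (A j) x) / real n\<bar> \<partial>M) \<longlonglongrightarrow> (0::real) \<and>
         (\<lambda>n. \<integral>x. \<bar>indicator (space M - A n) x * f n x\<bar> \<partial>M) \<longlonglongrightarrow> 0"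
    then obtain A :: "nat \<Rightarrow> 'a set" where a: "\<forall>n. A n \<in> sets M"
      and b: "(\<lambda>n. \<integral>x. \<bar>(\<Sum>j<n. indicator (A j) x) / real n\<bar> \<partial>M) \<longlonglongrightarrow> (0::real)"
      and c: "(\<lambda>n. \<integral>x. \<bar>indicator (space M - A n) x * f n x\<bar> \<partial>M) \<longlonglongrightarrow> 0"
      by (elim exE conjE)
    show "(\<lambda>n. \<integral>x. \<bar>(\<Sum>j<n. f j x) / real n\<bar> \<partial>M) \<longlonglongrightarrow> 0"
      by (rule l1_rev[OF assms a b c])
  qed
  show ?thesis using P1 P2 by (rule conjI)
qed

end
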